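(* Let $G$ be a finite group and $T_G = \{(g,h,gh)\mid g,h\in G\}\subseteq G^3$. Then $T_G$ admits a Mal'tsev polymorphism if and only if $G$ is abelian.
   Context: For an $n$-ary relation $R\subseteq A^n$, a $d$-ary polymorphism of $R$ is a map $f:A^d\to A$ such that whenever $d$ tuples $(x_{1,1},\dots,x_{1,n}),\dots,(x_{d,1},\dots,x_{d,n})$ lie in $R$, the tuple obtained by applying $f$ coordinatewise, $(f(x_{1,1},\dots,x_{d,1}),\dots,f(x_{1,n},\dots,x_{d,n}))$, also lies in $R$. A Mal'tsev polymorphism is a ternary polymorphism $f$ with $f(x,x,y)=f(y,x,x)=y$ for all $x,y\in A$. *)

theory Defs
  imports "HOL-Algebra.Group"
begin

text \<open>An n-ary relation on A is a set of lists of length n over A.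
  A d-ary operation on A is a function on lists (its values on lists of length d over A matter).\<close>

definition polymorphism :: "'a set \<Rightarrow> nat \<Rightarrow> 'a list set \<Rightarrow> nat \<Rightarrow> ('a list \<Rightarrow> 'a) \<Rightarrow> bool" where
  "polymorphism A n R d f \<longleftrightarrow>
     (\<forall>xs. length xs = d \<and> set xs \<subseteq> A \<longrightarrow> f xs \<in> A) \<and>
     (\<forall>rows. length rows = d \<and> (\<forall>r\<in>set rows. r \<in> R) \<longrightarrow>
        map (\<lambda>j. f (map (\<lambda>r. r ! j) rows)) [0..<n] \<in> R)"

definition maltsev_polymorphism :: "'a set \<Rightarrow> nat \<Rightarrow> 'a list set \<Rightarrow> ('a list \<Rightarrow> 'a) \<Rightarrow> bool" where
  "maltsev_polymorphism A n R f \<longleftrightarrow>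
     polymorphism A n R 3 f \<and>
     (\<forall>x\<in>A. \<forall>y\<in>A. f [x, x, y] = y \<and> f [y, x, x] = y)"

definition mult_relation :: "('a, 'b) monoid_scheme \<Rightarrow> 'a list set" where
  "mult_relation G = {[g, h, g \<otimes>\<^bsub>G\<^esub> h] | g h. g \<in> carrier G \<and> h \<in> carrier G}"

end

theory Submission
  imports Defs
begin

lemma mr_iff: "[a,b,c] \<in> mult_relation G \<longleftrightarrow> a \<in> carrier G \<and> b \<in> carrier G \<and> c = a \<otimes>\<^bsub>G\<^esub> b"
  unfolding mult_relation_def by auto

lemma mr_form: "r \<in> mult_relation G \<Longrightarrow> \<exists>a b. r = [a,b,a \<otimes>\<^bsub>G\<^esub> b] \<and> a \<in> carrier G \<and> b \<in> carrier G"
  unfolding mult_relation_def by auto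

lemma upt3: "[0..<3] = [0::nat,1,2]"
  by (simp add: upt_rec)

theorem lemma2p3:
  fixes G :: "('a, 'b) monoid_scheme"
  assumes "group G" and "finite (carrier G)"
  shows "(\<exists>f. maltsev_polymorphism (carrier G) 3 (mult_relation G) f) \<longleftrightarrow> comm_group G"
proof
  interpret group G by fact
  assume "\<exists>f. maltsev_polymorphism (carrier G) 3 (mult_relation G) f"
  then obtain f where P: "polymorphism (carrier G) 3 (mult_relation G) 3 f"
    and M: "\<And>x y. x \<in> carrier G \<Longrightarrow> y \<in> carrier G \<Longrightarrow> f [x, x, y] = y \<and> f [y, x, x] = y"
    unfolding maltsev_polymorphism_def by blast
  have Pr: "map (\<lambda>j. f (map (\<lambda>r. r ! j) rows)) [0..<3] \<in> mult_relation G"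
    if "length rows = 3" "\<forall>r\<in>set rows. r \<in> mult_relation G" for rows
    using P that unfolding polymorphism_def by blast
  have key: "f [g, \<one>\<^bsub>G\<^esub>, h] = g \<otimes>\<^bsub>G\<^esub> h" if g: "g \<in> carrier G" and h: "h \<in> carrier G" for g h
  proof -
    have "[[g,\<one>\<^bsub>G\<^esub>,g],[\<one>\<^bsub>G\<^esub>,\<one>\<^bsub>G\<^esub>,\<one>\<^bsub>G\<^esub>],[\<one>\<^bsub>G\<^esub>,h,h]] \<in> lists (mult_relation G)"
      using g h by (auto simp: mr_iff)
    then have "map (\<lambda>j. f (map (\<lambda>r. r ! j) [[g,\<one>\<^bsub>G\<^esub>,g],[\<one>\<^bsub>G\<^esub>,\<one>\<^bsub>G\<^esub>,\<one>\<^bsub>G\<^esub>],[\<one>\<^bsub>G\<^esub>,h,h]])) [0..<3] \<in> mult_relation G"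
      by (intro Pr) auto
    then have "[f [g,\<one>\<^bsub>G\<^esub>,\<one>\<^bsub>G\<^esub>], f [\<one>\<^bsub>G\<^esub>,\<one>\<^bsub>G\<^esub>,h], f [g,\<one>\<^bsub>G\<^esub>,h]] \<in> mult_relation G"
      by (simp add: upt3)
    moreover have "f [g,\<one>\<^bsub>G\<^esub>,\<one>\<^bsub>G\<^esub>] = g" "f [\<one>\<^bsub>G\<^esub>,\<one>\<^bsub>G\<^esub>,h] = h" using M g h by auto
    ultimately show ?thesis by (simp add: mr_iff)
  qed
  show "comm_group G"
  proof (rule group.group_comm_groupI[OF assms(1)])
    fix x y assume "x \<in> carrier G" "y \<in> carrier G"
    have c: "[[\<one>\<^bsub>G\<^esub>,y,y],[\<one>\<^bsub>G\<^esub>,\<one>\<^bsub>G\<^esub>,\<one>\<^bsub>G\<^esub>],[x,\<one>\<^bsub>G\<^esub>,x]] \<in> lists (mult_relation G)"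
      using \<open>x \<in> carrier G\<close> \<open>y \<in> carrier G\<close> by (auto simp: mr_iff)
    then have "map (\<lambda>j. f (map (\<lambda>r. r ! j) [[\<one>\<^bsub>G\<^esub>,y,y],[\<one>\<^bsub>G\<^esub>,\<one>\<^bsub>G\<^esub>,\<one>\<^bsub>G\<^esub>],[x,\<one>\<^bsub>G\<^esub>,x]])) [0..<3] \<in> mult_relation G"
      by (intro Pr) auto
    then have "[f [\<one>\<^bsub>G\<^esub>,\<one>\<^bsub>G\<^esub>,x], f [y,\<one>\<^bsub>G\<^esub>,\<one>\<^bsub>G\<^esub>], f [y,\<one>\<^bsub>G\<^esub>,x]] \<in> mult_relation G"
      by (simp add: upt3)
    moreover have "f [\<one>\<^bsub>G\<^esub>,\<one>\<^bsub>G\<^esub>,x] = x" "f [y,\<one>\<^bsub>G\<^esub>,\<one>\<^bsub>G\<^esub>] = y" using M \<open>x \<in> carrier G\<close> \<open>y \<in> carrier G\<close> by auto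
    ultimately have "f [y,\<one>\<^bsub>G\<^esub>,x] = x \<otimes>\<^bsub>G\<^esub> y" by (simp add: mr_iff)
    with key[OF \<open>y \<in> carrier G\<close> \<open>x \<in> carrier G\<close>] show "x \<otimes>\<^bsub>G\<^esub> y = y \<otimes>\<^bsub>G\<^esub> x" by simp
  qed
next
  assume C: "comm_group G"
  interpret comm_group G by fact
  define f where "f = (\<lambda>xs. xs!0 \<otimes>\<^bsub>G\<^esub> inv\<^bsub>G\<^esub> (xs!1) \<otimes>\<^bsub>G\<^esub> xs!2)"
  have A: "f xs \<in> carrier G" if "length xs = 3" "set xs \<subseteq> carrier G" for xs
  proof -
    have "xs!0 \<in> carrier G" "xs!1 \<in> carrier G" "xs!2 \<in> carrier G" using that by auto
    then show ?thesis unfolding f_def by auto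
  qed
  have B: "map (\<lambda>j. f (map (\<lambda>r. r ! j) rows)) [0..<3] \<in> mult_relation G"
    if len: "length rows = 3" and all: "\<forall>r\<in>set rows. r \<in> mult_relation G" for rows
  proof -
    obtain r1 r2 r3 where rs: "rows = [r1,r2,r3]" using \<open>length rows = 3\<close>
      by (auto simp: numeral_3_eq_3 length_Suc_conv)
    obtain a1 b1 a2 b2 a3 b3 where
      "r1 = [a1,b1,a1 \<otimes>\<^bsub>G\<^esub> b1]" "r2 = [a2,b2,a2 \<otimes>\<^bsub>G\<^esub> b2]" "r3 = [a3,b3,a3 \<otimes>\<^bsub>G\<^esub> b3]"
      and c: "a1 \<in> carrier G" "b1 \<in> carrier G" "a2 \<in> carrier G" "b2 \<in> carrier G" "a3 \<in> carrier G" "b3 \<in> carrier G"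
    proof -
      have "r1 \<in> mult_relation G" "r2 \<in> mult_relation G" "r3 \<in> mult_relation G"
        using all rs by auto
      then show ?thesis using mr_form that by meson
    qed
    then have e: "map (\<lambda>j. f (map (\<lambda>r. r ! j) rows)) [0..<3] =
        [a1 \<otimes>\<^bsub>G\<^esub> inv\<^bsub>G\<^esub> a2 \<otimes>\<^bsub>G\<^esub> a3, b1 \<otimes>\<^bsub>G\<^esub> inv\<^bsub>G\<^esub> b2 \<otimes>\<^bsub>G\<^esub> b3, a1 \<otimes>\<^bsub>G\<^esub> b1 \<otimes>\<^bsub>G\<^esub> inv\<^bsub>G\<^esub> (a2 \<otimes>\<^bsub>G\<^esub> b2) \<otimes>\<^bsub>G\<^esub> (a3 \<otimes>\<^bsub>G\<^esub> b3)]"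
      using rs by (simp add: upt3 f_def)
    have "a1 \<otimes>\<^bsub>G\<^esub> b1 \<otimes>\<^bsub>G\<^esub> inv\<^bsub>G\<^esub> (a2 \<otimes>\<^bsub>G\<^esub> b2) \<otimes>\<^bsub>G\<^esub> (a3 \<otimes>\<^bsub>G\<^esub> b3) = a1 \<otimes>\<^bsub>G\<^esub> inv\<^bsub>G\<^esub> a2 \<otimes>\<^bsub>G\<^esub> a3 \<otimes>\<^bsub>G\<^esub> (b1 \<otimes>\<^bsub>G\<^esub> inv\<^bsub>G\<^esub> b2 \<otimes>\<^bsub>G\<^esub> b3)"
      using c by (simp add: inv_mult m_ac)
    then show ?thesis unfolding e using c by (simp add: mr_iff)
  qed
  have "maltsev_polymorphism (carrier G) 3 (mult_relation G) f"
    unfolding maltsev_polymorphism_def polymorphism_def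
  proof (intro conjI allI impI ballI)
    fix xs :: "'a list" assume "length xs = 3 \<and> set xs \<subseteq> carrier G"
    then show "f xs \<in> carrier G" using A by blast
  next
    fix rows :: "'a list list" assume "length rows = 3 \<and> (\<forall>r\<in>set rows. r \<in> mult_relation G)"
    then show "map (\<lambda>j. f (map (\<lambda>r. r ! j) rows)) [0..<3] \<in> mult_relation G" using B by blast
  next
    fix x y assume "x \<in> carrier G" "y \<in> carrier G"
    then show "f [x, x, y] = y" "f [y, x, x] = y" by (simp_all add: f_def m_assoc)
  qed
  then show "\<exists>f. maltsev_polymorphism (carrier G) 3 (mult_relation G) f" by blast
qed

end
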